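(* For integers $i\ge 0$ and $j\ge 0$, let $g^{(2)}_{i,j}$ be the number of 2-generalized grand Motzkin paths of length $i$ and height $j$. Then for every $j\ge 0$, $$M^{(j)}(x):=\sum_{i\ge 0} g^{(2)}_{i,j}x^i=\frac{F(x)^{j+1}\,C\big(F(x)^2\big)^j}{x\big(1-2F(x)^2C(F(x)^2)\big)},$$ where $F(x)=\frac{x}{1-x-x^2}$ and $C(x)=\frac{1-\sqrt{1-4x}}{2x}$. Moreover, for $0\le j\le i$, $$g^{(2)}_{i,j}=\sum_{m=0}^{i}\sum_{l=0}^{i-j-2m}\binom{2m+j}{m}\binom{l+j+2m}{l}\binom{l}{i-j-2m-l}.$$
   Context: A 2-generalized grand Motzkin path of length $n$ is a lattice path in $\mathbb{Z}\times\mathbb{Z}$ starting at $(0,0)$ and ending at a point with $x$-coordinate $n$, using steps $U=(1,1)$, $D=(1,-1)$, $H=(1,0)$ and $H_2=(2,0)$, with no restriction of staying above the $x$-axis. Its height is its final $y$-coordinate. $F(x)$ is the generating function of the Fibonacci numbers and $C(x)$ that of the Catalan numbers; $C(F(x)^2)$ denotes composition of formal power series. Sums with upper limit smaller than the lower limit are empty. *)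

theory Defs
  imports "HOL-Computational_Algebra.Formal_Power_Series"
begin

datatype step = U | D | H | H2

fun step_len :: "step \<Rightarrow> nat" where
  "step_len U = 1" | "step_len D = 1" | "step_len H = 1" | "step_len H2 = 2"

fun step_rise :: "step \<Rightarrow> int" where
  "step_rise U = 1" | "step_rise D = -1" | "step_rise H = 0" | "step_rise H2 = 0"

text \<open>A 2-generalized grand Motzkin path is a word over the steps; its length is the
 final x-coordinate and its height the final y-coordinate.\<close>
definition path_length :: "step list \<Rightarrow> nat" where
  "path_length p = (\<Sum>s\<leftarrow>p. step_len s)"

definition path_height :: "step list \<Rightarrow> int" where
  "path_height p = (\<Sum>s\<leftarrow>p. step_rise s)"

definition g2 :: "nat \<Rightarrow> nat \<Rightarrow> nat" where
  "g2 i j = card {p. path_length p = i \<and> path_height p = int j}"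

definition catalan :: "nat \<Rightarrow> nat" where
  "catalan n = (2 * n choose n) div (n + 1)"

definition fibF :: "real fps" where
  "fibF = fps_X / (1 - fps_X - fps_X ^ 2)"

definition catC :: "real fps" where
  "catC = Abs_fps (\<lambda>n. real (catalan n))"

definition Mj :: "nat \<Rightarrow> real fps" where
  "Mj j = Abs_fps (\<lambda>i. real (g2 i j))"

end

theory Submission
  imports Defs
begin

unbundle fps_syntax


definition Pset :: "nat \<Rightarrow> int \<Rightarrow> step list set" where
  "Pset i h = {p. path_length p = i \<and> path_height p = h}"

lemma pl_Nil[simp]: "path_length [] = 0" by (simp add: path_length_def)
lemma pl_Cons[simp]: "path_length (s#p) = step_len s + path_length p" by (simp add: path_length_def)
lemma ph_Nil[simp]: "path_height [] = 0" by (simp add: path_height_def)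
lemma ph_Cons[simp]: "path_height (s#p) = step_rise s + path_height p" by (simp add: path_height_def)

lemma step_len_pos: "step_len s \<ge> 1" by (cases s) auto

lemma length_le_pl: "length p \<le> path_length p"
proof (induction p)
  case (Cons s p) then show ?case using step_len_pos[of s] by simp
qed simp

lemma UNIV_step: "(UNIV :: step set) = {U, D, H, H2}"
  by (rule set_eqI, case_tac x) auto

lemma finite_Pset: "finite (Pset i h)"
proof -
  have "Pset i h \<subseteq> {xs. set xs \<subseteq> UNIV \<and> length xs \<le> i}"
    unfolding Pset_def using length_le_pl by (auto intro: order.trans)
  moreover have "finite {xs. set xs \<subseteq> (UNIV::step set) \<and> length xs \<le> i}"
    by (rule finite_lists_length_le) (simp add: UNIV_step)
  ultimately show ?thesis by (rule finite_subset)
qed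

lemma Pset_0: "Pset 0 h = (if h = 0 then {[]} else {})"
proof -
  have "path_length p = 0 \<longleftrightarrow> p = []" for p
  proof (cases p)
    case (Cons s q) then show ?thesis using step_len_pos[of s] by simp
  qed simp
  then show ?thesis unfolding Pset_def by (simp add: set_eq_iff) (metis ph_Nil)
qed

lemma Cons_in_image[simp]: "s#q \<in> Cons t ` A \<longleftrightarrow> s = t \<and> q \<in> A" by auto
lemma Nil_in_image[simp]: "[] \<notin> Cons t ` A" by auto

lemma Pset_Suc: "Pset (Suc n) h = Cons U ` Pset n (h-1) \<union> Cons D ` Pset n (h+1) \<union> Cons H ` Pset n h
   \<union> Cons H2 ` {p. Suc (path_length p) = n \<and> path_height p = h}"
proof (rule set_eqI)
  fix p show "p \<in> Pset (Suc n) h \<longleftrightarrow> p \<in> Cons U ` Pset n (h-1) \<union> Cons D ` Pset n (h+1) \<union> Cons H ` Pset n h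
   \<union> Cons H2 ` {p. Suc (path_length p) = n \<and> path_height p = h}"
  proof (cases p)
    case Nil then show ?thesis by (simp add: Pset_def)
  next
    case (Cons s q) then show ?thesis by (cases s) (simp_all add: Pset_def, linarith+)
  qed
qed

definition G :: "int \<Rightarrow> nat \<Rightarrow> real" where
  "G h i = real (card (Pset i h))"

lemma card_Pset_Suc: "card (Pset (Suc n) h) = card (Pset n (h-1)) + card (Pset n (h+1)) + card (Pset n h)
   + card {p. Suc (path_length p) = n \<and> path_height p = h}"
proof -
  have fin: "finite {p. Suc (path_length p) = n \<and> path_height p = h}"
    by (rule finite_subset[OF _ finite_Pset[of "n - 1" h]]) (auto simp: Pset_def)
  have inj: "inj_on (Cons s) A" for s :: step and A by (auto intro: inj_onI)
  have ci: "card (Cons s ` A) = card A" for s :: step and A by (rule card_image[OF inj])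
  have fi: "finite (Cons s ` Pset m k)" for s m k by (simp add: finite_Pset)
  have fi2: "finite (Cons s ` {p. Suc (path_length p) = n \<and> path_height p = h})" for s using fin by simp
  have d1: "Cons s ` A \<inter> Cons t ` B = {}" if "s \<noteq> t" for s t :: step and A B using that by auto
  show ?thesis unfolding Pset_Suc
    apply (subst card_Un_disjoint)
      apply (simp add: fi fi2)
     apply (simp add: fi2)
    using d1 apply blast
    apply (subst card_Un_disjoint)
      apply (simp add: fi)
     apply (simp add: fi)
    using d1 apply blast
    apply (subst card_Un_disjoint)
      apply (simp add: fi)
     apply (simp add: fi)
    using d1 apply blast
    apply (simp add: ci)
    done
qed

lemma G_0: "G h 0 = (if h = 0 then 1 else 0)"
  by (simp add: G_def Pset_0)

lemma G_1: "G h 1 = G (h-1) 0 + G (h+1) 0 + G h 0"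
  using card_Pset_Suc[of 0 h] by (simp add: G_def)

lemma G_SS: "G h (Suc (Suc n)) = G (h-1) (Suc n) + G (h+1) (Suc n) + G h (Suc n) + G h n"
  using card_Pset_Suc[of "Suc n" h] by (simp add: G_def Pset_def)





lemma cat_dvd: "Suc m dvd (2*m choose m)"
proof -
  have e: "Suc m * (2*m choose Suc m) = m * (2*m choose m)"
  proof -
    have "Suc m * (2*m choose Suc m) = (2*m - m) * (2*m choose m)"
      by (simp only: binomial_absorption binomial_absorb_comp)
    then show ?thesis by simp
  qed
  have "2*m choose m = Suc m * (2*m choose m) - m * (2*m choose m)" by (simp add: diff_mult_distrib)
  also have "\<dots> = Suc m * ((2*m choose m) - (2*m choose Suc m))" using e by (simp add: diff_mult_distrib2)
  finally show ?thesis by (metis dvd_triv_left)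
qed

lemma catalan_real: "real (catalan m) = real (2*m choose m) / (m+1)"
  unfolding catalan_def using cat_dvd[of m] by (simp add: real_of_nat_div)

lemma central_rec_nat: "Suc m * (2*Suc m choose Suc m) = 2*(2*m+1) * (2*m choose m)"
proof -
  have a: "Suc m * (Suc (Suc (2*m)) choose Suc m) = Suc (Suc (2*m)) * (Suc (2*m) choose m)"
    by (rule Suc_times_binomial)
  have b: "Suc m * (Suc (2*m) choose Suc m) = Suc (2*m) * ((2*m) choose m)"
    by (rule Suc_times_binomial)
  have c: "Suc (2*m) choose m = Suc (2*m) choose Suc m"
    using binomial_symmetric[of m "Suc (2*m)"] by simp
  have eq: "2*Suc m = Suc (Suc (2*m))" by simp
  have "Suc m * (Suc m * (2*Suc m choose Suc m)) = Suc m * (Suc (Suc (2*m)) * (Suc (2*m) choose m))"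
    by (simp only: eq a)
  also have "\<dots> = Suc (Suc (2*m)) * (Suc m * (Suc (2*m) choose Suc m))"
    by (metis c mult.left_commute)
  also have "\<dots> = Suc (Suc (2*m)) * (Suc (2*m) * ((2*m) choose m))" by (simp only: b)
  also have "\<dots> = Suc m * (2*(2*m+1) * (2*m choose m))" by simp
  finally show ?thesis by (metis mult_left_cancel nat.distinct(1))
qed

lemma central_rec: "real (2*Suc m choose Suc m) * (m+1) = real (2*m choose m) * (2*(2*m+1))"
proof -
  have "real (Suc m * (2*Suc m choose Suc m)) = real (2*(2*m+1) * (2*m choose m))"
    using central_rec_nat by metis
  then show ?thesis by (simp add: algebra_simps)
qed

lemma gchoose_step: "(a::real) gchoose Suc k = (a gchoose k) * (a - of_nat k) / of_nat (Suc k)"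
proof -
  have "of_nat (Suc k) * (a gchoose Suc k) = (a - of_nat k) * (a gchoose k)"
    using gbinomial_absorption[of k a] gbinomial_absorb_comp[of a k] by simp
  then show ?thesis by (simp add: field_simps del: of_nat_Suc)
qed

lemma half_gchoose: "((1/2::real) gchoose Suc m) * (-4)^Suc m = -2 * real (catalan m)"
proof (induction m)
  case 0 then show ?case by (simp add: catalan_def)
next
  case (Suc m)
  have "((1/2::real) gchoose Suc (Suc m)) * (-4)^Suc (Suc m)
        = (((1/2::real) gchoose Suc m) * (-4)^Suc m) * ((1/2 - (m+1)) * (-4) / (m+2))"
    by (subst gchoose_step) (simp add: field_simps)
  also have "\<dots> = -2 * (real (2*m choose m) / (m+1)) * ((1/2 - (m+1)) * (-4) / (m+2))"
    using Suc catalan_real by simp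
  also have "\<dots> = -2 * (real (2*m choose m) * (2*(2*m+1)) / ((m+1)*(m+2)))"
  proof -
    have f: "(1/2 - real (m+1)) * (-4) = real (2*(2*m+1))" by (simp add: algebra_simps)
    show ?thesis by (simp only: f times_divide_times_eq mult.assoc of_nat_mult)
  qed
  also have "\<dots> = -2 * (real (2*Suc m choose Suc m) * (m+1) / ((m+1)*(m+2)))"
    by (subst central_rec) simp
  also have "\<dots> = -2 * (real (2*Suc m choose Suc m) / (m+2))"
  proof -
    have "real (m+1) \<noteq> 0" by simp
    note e = nonzero_mult_divide_mult_cancel_right[OF this, of "real (2*Suc m choose Suc m)" "real (m+2)"]
    show ?thesis by (simp only: of_nat_mult mult.commute[of "real (m+1)" "real (m+2)"] e)
  qed
  also have "\<dots> = -2 * real (catalan (Suc m))" using catalan_real[of "Suc m"] by simp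
  finally show ?case .
qed

definition Ssq :: "real fps" where "Ssq = Abs_fps (\<lambda>n. ((1/2::real) gchoose n) * (-4)^n)"

lemma Ssq_square: "Ssq^2 = 1 - 4 * fps_X"
proof (rule fps_ext)
  fix n
  have "(Ssq^2) $ n = (\<Sum>k=0..n. ((1/2::real) gchoose k) * ((1/2) gchoose (n-k))) * (-4)^n"
    by (simp add: power2_eq_square fps_mult_nth Ssq_def sum_distrib_right mult_ac power_add[symmetric])
       (simp add: sum_distrib_left mult_ac)
  also have "\<dots> = (1 gchoose n) * (-4)^n" by (subst gbinomial_Vandermonde) simp
  also have "\<dots> = (1 - 4 * fps_X :: real fps) $ n"
  proof -
    consider "n = 0" | "n = 1" | k where "n = Suc (Suc k)" by (metis One_nat_def not0_implies_Suc)
    then show ?thesis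
    proof cases
      case 3
      have "(1::real) gchoose Suc (Suc k) = 0"
        using gbinomial_Suc_Suc[of 0 "Suc k"] by simp
      then show ?thesis using 3 by (simp add: fps_numeral_nth)
    qed auto
  qed
  finally show "(Ssq^2) $ n = (1 - 4 * fps_X :: real fps) $ n" .
qed

lemma Ssq_cat: "Ssq = 1 - 2 * fps_X * catC"
proof (rule fps_ext)
  fix n show "Ssq $ n = (1 - 2 * fps_X * catC) $ n"
  proof (cases n)
    case (Suc m)
    have "(2 * fps_X * catC :: real fps) $ n = 2 * real (catalan m)"
      using Suc by (simp add: catC_def mult.assoc numeral_fps_const)
    then show ?thesis using Suc half_gchoose[of m] by (simp add: Ssq_def)
  qed (simp add: Ssq_def)
qed

lemma catC_eq: "catC = 1 + fps_X * catC^2"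
proof -
  have "(1 - 2 * fps_X * catC)^2 = 1 - 4 * fps_X" using Ssq_square Ssq_cat by simp
  then have "fps_X * (4 * (1 + fps_X * catC^2 - catC)) = 0"
    by (simp add: power2_eq_square algebra_simps)
  then have "4 * (1 + fps_X * catC^2 - catC) = (0::real fps)" by (simp only: mult_eq_0_iff fps_X_neq_zero simp_thms)
  then have "1 + fps_X * catC^2 - catC = (0::real fps)" by (simp only: mult_eq_0_iff numeral_neq_fps_zero simp_thms)
  then show ?thesis by (simp only: eq_iff_diff_eq_0[symmetric])
qed




definition recok :: "(int \<Rightarrow> nat \<Rightarrow> real) \<Rightarrow> bool" where
  "recok Q \<longleftrightarrow> (\<forall>h. Q h 0 = (if h = 0 then 1 else 0)) \<and> (\<forall>h. Q h 1 = Q (h-1) 0 + Q (h+1) 0 + Q h 0)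
     \<and> (\<forall>h n. Q h (Suc (Suc n)) = Q (h-1) (Suc n) + Q (h+1) (Suc n) + Q h (Suc n) + Q h n)"

lemma G_recok: "recok G"
  unfolding recok_def using G_0 G_1 G_SS by blast

lemma recok_unique:
  assumes Q: "recok Q" and R: "recok R"
  shows "Q h n = R h n"
proof -
  have "\<forall>h. Q h n = R h n \<and> Q h (Suc n) = R h (Suc n)"
  proof (induction n)
    case 0 then show ?case using Q R unfolding recok_def by simp
  next
    case (Suc n)
    then show ?case using Q R unfolding recok_def by simp
  qed
  then show ?thesis by blast
qed

abbreviation PP :: "real fps" where "PP \<equiv> 1 - fps_X - fps_X^2"
definition Lf :: "real fps" where "Lf = inverse PP"
abbreviation yy :: "real fps" where "yy \<equiv> fibF ^ 2"
abbreviation AA :: "real fps" where "AA \<equiv> fps_compose catC (fibF ^ 2)"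
abbreviation Vden :: "real fps" where "Vden \<equiv> 1 - 2 * fibF ^ 2 * fps_compose catC (fibF ^ 2)"
definition Vf :: "real fps" where "Vf = inverse Vden"
definition Zf :: "real fps" where "Zf = fibF * AA"
definition Qf :: "int \<Rightarrow> real fps" where "Qf h = Zf ^ nat \<bar>h\<bar> * Lf * Vf"

lemma PP0: "PP $ 0 = 1" by simp
lemma PL: "PP * Lf = 1" unfolding Lf_def by (rule inverse_mult_eq_1') simp
lemma fibF_XL: "fibF = fps_X * Lf" unfolding fibF_def Lf_def by (subst fps_divide_unit) simp_all
lemma fibF0: "fibF $ 0 = 0" by (simp add: fibF_XL)
lemma yy0: "yy $ 0 = 0" by (simp add: fibF0 power2_eq_square)
lemma AA_eq: "AA = 1 + yy * AA^2"
proof -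
  have "AA = (1 + fps_X * catC^2) oo yy" using catC_eq by simp
  also have "\<dots> = 1 + yy * AA^2"
    by (simp add: fps_compose_add_distrib fps_compose_mult_distrib[OF yy0] fps_compose_power[OF yy0] yy0)
  finally show ?thesis .
qed
lemma Vden0: "Vden $ 0 = 1"
proof -
  have "(2 * yy * AA) $ 0 = 0" by (simp only: fps_mult_nth_0 yy0 mult_zero_right mult_zero_left)
  then show ?thesis by (simp only: fps_sub_nth fps_one_nth) simp
qed
lemma Vden_nz: "Vden $ 0 \<noteq> 0" by (simp only: Vden0)
lemma VV: "Vden * Vf = 1" unfolding Vf_def by (rule inverse_mult_eq_1'[OF Vden_nz])
lemma V_eq: "Vf = 1 + 2 * yy * AA * Vf"
proof -
  have "Vf - 2 * yy * AA * Vf = 1" using VV by (simp add: algebra_simps)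
  then show ?thesis by (simp add: algebra_simps)
qed
lemma PZ: "PP * Zf = fps_X + fps_X * Zf^2"
proof -
  have "PP * Zf = fps_X * (PP * Lf) * AA" by (simp add: Zf_def fibF_XL algebra_simps)
  also have "\<dots> = fps_X * AA" by (simp add: PL)
  also have "\<dots> = fps_X * (1 + yy * AA^2)" using AA_eq by simp
  also have "\<dots> = fps_X + fps_X * Zf^2" by (simp add: Zf_def algebra_simps power_mult_distrib)
  finally show ?thesis .
qed

lemma Qf_fps_rec: "PP * Qf h = (if h = 0 then 1 else 0) + fps_X * (Qf (h-1) + Qf (h+1))"
proof -
  consider "h = 0" | "h > 0" | "h < 0" by linarith
  then show ?thesis
  proof cases
    case 1
    have "PP * Qf h = Vf" using 1 PL by (simp add: Qf_def mult.assoc[symmetric])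
    also have "\<dots> = 1 + 2 * yy * AA * Vf" by (rule V_eq)
    also have "\<dots> = 1 + fps_X * (Qf (h-1) + Qf (h+1))"
      using 1 by (simp add: Qf_def Zf_def fibF_XL algebra_simps power2_eq_square)
    finally show ?thesis using 1 by simp
  next
    case 2
    define k where "k = nat h - 1"
    have k1: "nat \<bar>h\<bar> = Suc k" "nat \<bar>h-1\<bar> = k" "nat \<bar>h+1\<bar> = Suc (Suc k)" using 2 unfolding k_def by auto
    have "PP * Qf h = Zf^k * Lf * Vf * (PP * Zf)" using k1 by (simp add: Qf_def algebra_simps)
    also have "\<dots> = Zf^k * Lf * Vf * (fps_X + fps_X * Zf^2)" by (simp only: PZ)
    also have "\<dots> = fps_X * (Qf (h-1) + Qf (h+1))" using k1 by (simp add: Qf_def algebra_simps power2_eq_square)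
    finally show ?thesis using 2 by simp
  next
    case 3
    define k where "k = nat (-h) - 1"
    have k1: "nat \<bar>h\<bar> = Suc k" "nat \<bar>h+1\<bar> = k" "nat \<bar>h-1\<bar> = Suc (Suc k)" using 3 unfolding k_def by auto
    have "PP * Qf h = Zf^k * Lf * Vf * (PP * Zf)" using k1 by (simp add: Qf_def algebra_simps)
    also have "\<dots> = Zf^k * Lf * Vf * (fps_X + fps_X * Zf^2)" by (simp only: PZ)
    also have "\<dots> = fps_X * (Qf (h-1) + Qf (h+1))" using k1 by (simp add: Qf_def algebra_simps power2_eq_square)
    finally show ?thesis using 3 by simp
  qed
qed

lemma Qf_rec: "Qf h = (if h = 0 then 1 else 0) + fps_X * (Qf (h-1) + Qf (h+1) + Qf h) + fps_X^2 * Qf h"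
  using Qf_fps_rec[of h] by (simp add: algebra_simps)

lemma Qf_recok: "recok (\<lambda>h n. Qf h $ n)"
proof -
  have c: "Qf h $ n = ((if h = 0 then 1 else 0) + fps_X * (Qf (h-1) + Qf (h+1) + Qf h) + fps_X^2 * Qf h) $ n" for h n
    by (subst Qf_rec) simp
  show ?thesis unfolding recok_def
    by (intro conjI allI) (subst c, simp add: fps_X_power_mult_nth)+
qed

lemma part1: "Mj j = (fibF ^ (j + 1) * (fps_compose catC (fibF ^ 2)) ^ j)
                    / (fps_X * (1 - 2 * fibF ^ 2 * fps_compose catC (fibF ^ 2)))"
proof -
  have "Mj j = Qf (int j)"
  proof (rule fps_ext)
    fix n
    have "Mj j $ n = G (int j) n" by (simp add: Mj_def G_def g2_def Pset_def)
    also have "\<dots> = Qf (int j) $ n" using recok_unique[OF G_recok Qf_recok] by simp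
    finally show "Mj j $ n = Qf (int j) $ n" .
  qed
  also have "\<dots> = (fps_X * (Zf^j * Lf)) / (fps_X * Vden)"
    by (simp add: Qf_def Vf_def fps_divide_unit[OF Vden_nz])
  also have "\<dots> = (fibF ^ (j + 1) * AA ^ j) / (fps_X * Vden)"
    by (simp add: Zf_def fibF_XL power_mult_distrib algebra_simps)
  finally show ?thesis .
qed



definition Tc :: "nat \<Rightarrow> nat \<Rightarrow> nat" where
  "Tc k n = (\<Sum>l=0..n. (l + k choose l) * (l choose (n - l)))"

lemma Tc_0: "Tc k 0 = 1" by (simp add: Tc_def)

lemma choose_Suc_split: "l \<le> n \<Longrightarrow> Suc l choose (n - l) = (l choose (n - l)) + (if l < n then l choose (n - 1 - l) else 0)"
proof (cases "l < n")
  case True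
  then have "n - l = Suc (n - 1 - l)" by simp
  then show ?thesis using True by simp
qed simp

lemma Tc_Suc: "Tc k (Suc n) = (if k = 0 then 0 else Tc (k-1) (Suc n)) + Tc k n + (if n = 0 then 0 else Tc k (n-1))"
proof -
  have "Tc k (Suc n) = (\<Sum>l=0..n. (Suc l + k choose Suc l) * (Suc l choose (n - l)))"
    unfolding Tc_def by (subst sum.atLeast0_atMost_Suc_shift) simp
  also have "\<dots> = (\<Sum>l=0..n. (l + k choose l) * (Suc l choose (n - l)))
                  + (\<Sum>l=0..n. (l + k choose Suc l) * (Suc l choose (n - l)))"
    unfolding sum.distrib[symmetric] by (rule sum.cong) (simp_all add: algebra_simps)
  also have "(\<Sum>l=0..n. (l + k choose l) * (Suc l choose (n - l)))
      = Tc k n + (\<Sum>l=0..n. if l < n then (l + k choose l) * (l choose (n - 1 - l)) else 0)"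
    unfolding Tc_def sum.distrib[symmetric]
    by (rule sum.cong) (auto simp: choose_Suc_split algebra_simps simp del: binomial_Suc_Suc)
  also have "(\<Sum>l=0..n. if l < n then (l + k choose l) * (l choose (n - 1 - l)) else 0)
      = (if n = 0 then 0 else Tc k (n-1))"
  proof (cases n)
    case (Suc n')
    have "(\<Sum>l=0..Suc n'. if l < Suc n' then (l + k choose l) * (l choose (Suc n' - 1 - l)) else 0)
        = (\<Sum>l=0..n'. (l + k choose l) * (l choose (n' - l)))"
      by (subst sum.atLeast0_atMost_Suc) (auto intro: sum.cong)
    then show ?thesis using Suc by (simp add: Tc_def)
  qed simp
  also have "(\<Sum>l=0..n. (l + k choose Suc l) * (Suc l choose (n - l))) = (if k = 0 then 0 else Tc (k-1) (Suc n))"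
  proof (cases k)
    case (Suc k')
    have "Tc k' (Suc n) = (\<Sum>l=0..n. (Suc l + k' choose Suc l) * (Suc l choose (Suc n - Suc l)))"
      unfolding Tc_def by (subst sum.atLeast0_atMost_Suc_shift) simp
    also have "\<dots> = (\<Sum>l=0..n. (l + k choose Suc l) * (Suc l choose (n - l)))"
      using Suc by simp
    finally show ?thesis using Suc by simp
  qed simp
  finally show ?thesis by simp
qed

fun Wc :: "nat \<Rightarrow> int \<Rightarrow> nat" where
  "Wc 0 h = (if h = 0 then 1 else 0)"
| "Wc (Suc k) h = Wc k (h-1) + Wc k (h+1)"

definition Tm :: "nat \<Rightarrow> nat \<Rightarrow> nat" where
  "Tm k n = (if k = 0 then (if n = 0 then 1 else 0) else Tc (k-1) n)"

lemma Tc_gen: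
  assumes "k \<le> Suc i"
  shows "Tc k (Suc i - k) = Tm k (Suc i - k) + (if k \<le> i then Tc k (i - k) else 0)
           + (if k < i then Tc k (i - 1 - k) else 0)"
proof (cases "k \<le> i")
  case True
  then have e: "Suc i - k = Suc (i - k)" by simp
  have a: "Tc k (Suc (i-k)) = (if k=0 then 0 else Tc (k-1) (Suc (i-k))) + Tc k (i-k) + (if i-k=0 then 0 else Tc k (i-k-1))"
    by (rule Tc_Suc)
  have b: "Tm k (Suc (i-k)) = (if k = 0 then 0 else Tc (k-1) (Suc (i-k)))" by (simp add: Tm_def)
  have c: "(i - k = 0) = (\<not> k < i)" using True by arith
  have d: "i-k-1 = i-1-k" by simp
  show ?thesis unfolding e a b c d using True by simp
next
  case False
  then have "k = Suc i" using assms by simp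
  then show ?thesis by (simp add: Tm_def Tc_0)
qed

definition Ecn :: "int \<Rightarrow> nat \<Rightarrow> nat" where
  "Ecn h i = (\<Sum>k=0..i. Wc k h * Tc k (i-k))"

lemma Ecn_0: "Ecn h 0 = (if h = 0 then 1 else 0)"
  by (simp add: Ecn_def Tc_0)

lemma Ecn_Suc: "Ecn h (Suc i) = Ecn (h-1) i + Ecn (h+1) i + Ecn h i + (if i = 0 then 0 else Ecn h (i-1))"
proof -
  have "Ecn h (Suc i) = (\<Sum>k=0..Suc i. Wc k h * Tm k (Suc i - k))
       + (\<Sum>k=0..Suc i. Wc k h * (if k \<le> i then Tc k (i - k) else 0))
       + (\<Sum>k=0..Suc i. Wc k h * (if k < i then Tc k (i - 1 - k) else 0))"
    unfolding Ecn_def sum.distrib[symmetric]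
    by (rule sum.cong) (simp_all add: Tc_gen distrib_left)
  also have "(\<Sum>k=0..Suc i. Wc k h * Tm k (Suc i - k)) = Ecn (h-1) i + Ecn (h+1) i"
    unfolding Ecn_def sum.distrib[symmetric]
    by (subst sum.atLeast0_atMost_Suc_shift) (auto simp: Tm_def distrib_right intro: sum.cong)
  also have "(\<Sum>k=0..Suc i. Wc k h * (if k \<le> i then Tc k (i - k) else 0)) = Ecn h i"
    unfolding Ecn_def by (subst sum.atLeast0_atMost_Suc) (auto intro: sum.cong)
  also have "(\<Sum>k=0..Suc i. Wc k h * (if k < i then Tc k (i - 1 - k) else 0)) = (if i = 0 then 0 else Ecn h (i-1))"
  proof (cases i)
    case (Suc i')
    show ?thesis unfolding Ecn_def Suc
      by (subst sum.atLeast0_atMost_Suc, subst sum.atLeast0_atMost_Suc) (auto intro: sum.cong)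
  qed simp
  finally show ?thesis .
qed

definition Ec :: "int \<Rightarrow> nat \<Rightarrow> real" where "Ec h i = real (Ecn h i)"

lemma Ec_recok: "recok Ec"
  unfolding recok_def Ec_def
proof (intro conjI allI)
  fix h show "real (Ecn h 0) = (if h = 0 then 1 else 0)" by (simp add: Ecn_0)
next
  fix h have "Ecn h (Suc 0) = Ecn (h-1) 0 + Ecn (h+1) 0 + Ecn h 0" by (simp only: Ecn_Suc) simp
  then show "real (Ecn h 1) = real (Ecn (h - 1) 0) + real (Ecn (h + 1) 0) + real (Ecn h 0)"
    by (simp only: One_nat_def of_nat_add)
next
  fix h n have "Ecn h (Suc (Suc n)) = Ecn (h-1) (Suc n) + Ecn (h+1) (Suc n) + Ecn h (Suc n) + Ecn h n"
    by (simp only: Ecn_Suc[of h "Suc n"]) simp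
  then show "real (Ecn h (Suc (Suc n))) = real (Ecn (h - 1) (Suc n)) + real (Ecn (h + 1) (Suc n)) + real (Ecn h (Suc n)) + real (Ecn h n)"
    by (simp only: of_nat_add)
qed

lemma g2_Ecn: "g2 i j = Ecn (int j) i"
proof -
  have "real (g2 i j) = G (int j) i" by (simp add: G_def g2_def Pset_def)
  also have "\<dots> = Ec (int j) i" using recok_unique[OF G_recok Ec_recok] by simp
  finally show ?thesis by (simp add: Ec_def)
qed



lemma Wc_gt: "int k < h \<Longrightarrow> Wc k h = 0"
  by (induction k arbitrary: h) auto

lemma Wc_odd: "odd (int k + h) \<Longrightarrow> Wc k h = 0"
proof (induction k arbitrary: h)
  case 0 then show ?case by auto
next
  case (Suc k)
  have "odd (int k + (h - 1))" "odd (int k + (h + 1))" using Suc.prems by (simp_all add: algebra_simps)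
  then show ?case using Suc.IH by simp
qed

lemma Wc_cf: "Wc k (int k - 2 * int d) = (k choose d)"
proof (induction k arbitrary: d)
  case 0 then show ?case by (cases d) auto
next
  case (Suc k)
  have e1: "int (Suc k) - 2 * int d - 1 = int k - 2 * int d" by simp
  show ?case
  proof (cases d)
    case 0
    show ?thesis using 0 Suc.IH[of 0] by (simp add: Wc_gt)
  next
    case (Suc d')
    have e2: "int (Suc k) - 2 * int d + 1 = int k - 2 * int d'" using Suc by simp
    have i1: "Wc k (int k - 2 * int d) = k choose d" by (rule Suc.IH)
    have i2: "Wc k (int k - 2 * int d') = k choose d'" by (rule Suc.IH)
    have "Wc (Suc k) (int (Suc k) - 2 * int d) = Wc k (int k - 2 * int d) + Wc k (int k - 2 * int d')"
      by (simp only: Wc.simps e1 e2)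
    then show ?thesis using i1 i2 Suc by simp
  qed
qed

lemma sum_step1: "(\<Sum>k=0..i. Wc k (int j) * Tc k (i-k))
   = (\<Sum>m=0..i. if j + 2*m \<le> i then (2*m + j choose m) * Tc (j + 2*m) (i - j - 2*m) else 0)"
proof -
  define f where "f k = Wc k (int j) * Tc k (i-k)" for k
  define S where "S = {m. m \<le> i \<and> j + 2*m \<le> i}"
  have "(\<Sum>m=0..i. if j + 2*m \<le> i then (2*m + j choose m) * Tc (j + 2*m) (i - j - 2*m) else 0)
      = (\<Sum>m\<in>S. (2*m + j choose m) * Tc (j + 2*m) (i - j - 2*m))"
    unfolding S_def by (subst sum.If_cases) (auto intro: sum.cong)
  also have "\<dots> = (\<Sum>m\<in>S. f (j + 2*m))"
  proof (rule sum.cong)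
    fix m assume "m \<in> S"
    have "Wc (j + 2*m) (int (j + 2*m) - 2 * int m) = (j + 2*m choose m)" by (rule Wc_cf)
    then have "Wc (j + 2*m) (int j) = (2*m + j choose m)" by (simp add: add.commute)
    then show "(2*m + j choose m) * Tc (j + 2*m) (i - j - 2*m) = f (j + 2*m)"
      by (simp add: f_def diff_diff_add)
  qed simp
  also have "\<dots> = (\<Sum>k\<in>(\<lambda>m. j + 2*m) ` S. f k)"
    by (subst sum.reindex) (auto intro: inj_onI)
  also have "\<dots> = (\<Sum>k=0..i. f k)"
  proof (rule sum.mono_neutral_left)
    show "(\<lambda>m. j + 2*m) ` S \<subseteq> {0..i}" unfolding S_def by auto
    show "\<forall>k\<in>{0..i} - (\<lambda>m. j + 2*m) ` S. f k = 0"
    proof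
      fix k assume k: "k \<in> {0..i} - (\<lambda>m. j + 2*m) ` S"
      show "f k = 0"
      proof (cases "k < j")
        case True then show ?thesis unfolding f_def using Wc_gt[of k "int j"] by simp
      next
        case False
        show ?thesis
        proof (cases "even (k - j)")
          case True
          then obtain m where m: "k - j = 2*m" by blast
          then have "k = j + 2*m" using False by simp
          moreover have "m \<in> S" using m k False unfolding S_def by auto
          ultimately show ?thesis using k by blast
        next
          case odd: False
          have "odd (int k + int j)"
          proof
            assume "even (int k + int j)"
            then have "even (int (k - j) + 2 * int j)" using False by (simp add: of_nat_diff)
            then have "even (int (k - j))" by simp
            then show False using odd by simp
          qed
          then show ?thesis unfolding f_def using Wc_odd by simp
        qed
      qed
    qed
  qed simp
  finally show ?thesis unfolding f_def by simp
qed

lemma int_sum_conv: "(\<Sum>l = (0::int)..int n. F l) = (\<Sum>l=0..n. F (int l))"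
proof -
  have "{0..int n} = int ` {0..n}" by (simp add: image_int_atLeastAtMost)
  then show ?thesis by (simp add: sum.reindex)
qed

lemma part2: "int (g2 i j) = (\<Sum>m = 0..i. \<Sum>l = 0..int i - int j - 2 * int m.
                int ((2 * m + j) choose m) * int ((nat l + j + 2 * m) choose (nat l))
                  * int ((nat l) choose (nat (int i - int j - 2 * int m - l))))"
proof -
  have "int (g2 i j) = (\<Sum>m=0..i. int (if j + 2*m \<le> i then (2*m + j choose m) * Tc (j + 2*m) (i - j - 2*m) else 0))"
    unfolding g2_Ecn Ecn_def sum_step1 by (simp only: of_nat_sum)
  also have "\<dots> = (\<Sum>m = 0..i. \<Sum>l = 0..int i - int j - 2 * int m.
                int ((2 * m + j) choose m) * int ((nat l + j + 2 * m) choose (nat l))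
                  * int ((nat l) choose (nat (int i - int j - 2 * int m - l))))"
  proof (rule sum.cong)
    fix m assume "m \<in> {0..i}"
    show "int (if j + 2*m \<le> i then (2*m + j choose m) * Tc (j + 2*m) (i - j - 2*m) else 0) =
      (\<Sum>l = 0..int i - int j - 2 * int m.
                int ((2 * m + j) choose m) * int ((nat l + j + 2 * m) choose (nat l))
                  * int ((nat l) choose (nat (int i - int j - 2 * int m - l))))"
    proof (cases "j + 2*m \<le> i")
      case True
      define n where "n = i - j - 2*m"
      have en: "int i - int j - 2 * int m = int n" unfolding n_def using True by simp
      have "(\<Sum>l = 0..int i - int j - 2 * int m.
                int ((2 * m + j) choose m) * int ((nat l + j + 2 * m) choose (nat l))
                  * int ((nat l) choose (nat (int i - int j - 2 * int m - l))))
          = (\<Sum>l = 0..n. int ((2 * m + j) choose m) * int ((l + j + 2 * m) choose l) * int (l choose (n - l)))"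
        unfolding en int_sum_conv by (rule sum.cong) (auto simp: nat_diff_distrib)
      also have "\<dots> = int ((2*m + j choose m) * Tc (j + 2*m) n)"
        unfolding Tc_def by (simp add: sum_distrib_left mult.assoc add.assoc)
      finally show ?thesis using True by (simp add: n_def)
    next
      case False
      then have "int i - int j - 2 * int m < 0" by simp
      then show ?thesis using False by simp
    qed
  qed simp
  finally show ?thesis .
qed


theorem theorem2p2:
  shows "(\<forall>j. Mj j = (fibF ^ (j + 1) * (fps_compose catC (fibF ^ 2)) ^ j)
                    / (fps_X * (1 - 2 * fibF ^ 2 * fps_compose catC (fibF ^ 2))))
       \<and> (\<forall>i j. j \<le> i \<longrightarrow>
             int (g2 i j) = (\<Sum>m = 0..i. \<Sum>l = 0..int i - int j - 2 * int m.
                int ((2 * m + j) choose m) * int ((nat l + j + 2 * m) choose (nat l))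
                  * int ((nat l) choose (nat (int i - int j - 2 * int m - l)))))"
  using part1 part2 by blast

end
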